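(* Let $G$ and $H$ be graphs on the same number $n$ of vertices, and suppose $G$ is regular. If $\lambda(G)\ge\lambda(H)$, then for every integer $s\ge 1$, \[ \lambda(G\vee\overline{K}_s)\ge \lambda(H\vee\overline{K}_s). \]
   Context: $\lambda(\cdot)$ is the spectral radius of the adjacency matrix; $\overline{K}_s$ is the edgeless graph on $s$ vertices; $G\vee H$ denotes the join, obtained from disjoint copies of $G$ and $H$ by adding all edges between them. *)

theory Defs
  imports "Jordan_Normal_Form.Spectral_Radius"
begin

text \<open>A simple graph on the vertex set {0..<n}, given by an edge relation E
  (only its values on {0..<n} matter): symmetric and loopless.\<close>
definition simple_graph :: "nat \<Rightarrow> (nat \<Rightarrow> nat \<Rightarrow> bool) \<Rightarrow> bool" where
  "simple_graph n E \<longleftrightarrow> (\<forall>i<n. \<forall>j<n. E i j \<longleftrightarrow> E j i) \<and> (\<forall>i<n. \<not> E i i)"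

definition degree_in :: "nat \<Rightarrow> (nat \<Rightarrow> nat \<Rightarrow> bool) \<Rightarrow> nat \<Rightarrow> nat" where
  "degree_in n E i = card {j. j < n \<and> E i j}"

definition regular_graph :: "nat \<Rightarrow> (nat \<Rightarrow> nat \<Rightarrow> bool) \<Rightarrow> bool" where
  "regular_graph n E \<longleftrightarrow> (\<exists>d. \<forall>i<n. degree_in n E i = d)"

text \<open>Adjacency matrix (over the complex numbers, as required by the library's
  spectral radius).\<close>
definition adj_mat :: "nat \<Rightarrow> (nat \<Rightarrow> nat \<Rightarrow> bool) \<Rightarrow> complex mat" where
  "adj_mat n E = mat n n (\<lambda>(i,j). if E i j then 1 else 0)"

definition graph_spectral_radius :: "nat \<Rightarrow> (nat \<Rightarrow> nat \<Rightarrow> bool) \<Rightarrow> real" where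
  "graph_spectral_radius n E = spectral_radius (adj_mat n E)"

text \<open>Join of a graph on {0..<n} with the edgeless graph on s vertices; the
  result lives on {0..<n+s}, the new vertices being n, ..., n+s-1.\<close>
definition join_empty :: "nat \<Rightarrow> (nat \<Rightarrow> nat \<Rightarrow> bool) \<Rightarrow> nat \<Rightarrow> nat \<Rightarrow> bool" where
  "join_empty n E i j \<longleftrightarrow> (i < n \<and> j < n \<and> E i j) \<or> (i < n \<and> \<not> j < n) \<or> (\<not> i < n \<and> j < n)"

end

theory Submission
  imports Defs
begin

definition mv :: "(nat \<Rightarrow> nat \<Rightarrow> real) \<Rightarrow> nat \<Rightarrow> (nat \<Rightarrow> real) \<Rightarrow> nat \<Rightarrow> real" where
  "mv a n x i = (\<Sum>j<n. a i j * x j)"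

fun itv :: "(nat \<Rightarrow> nat \<Rightarrow> real) \<Rightarrow> nat \<Rightarrow> nat \<Rightarrow> (nat \<Rightarrow> real) \<Rightarrow> nat \<Rightarrow> real" where
  "itv a n 0 x = x"
| "itv a n (Suc k) x = itv a n k (mv a n x)"

definition ip :: "nat \<Rightarrow> (nat \<Rightarrow> real) \<Rightarrow> (nat \<Rightarrow> real) \<Rightarrow> real" where
  "ip n x y = (\<Sum>i<n. x i * y i)"

lemma itv_Suc': "itv a n (Suc k) x = mv a n (itv a n k x)"
  by (induction k arbitrary: x) auto

lemma ip_mv_sym:
  assumes "\<And>i j. i < n \<Longrightarrow> j < n \<Longrightarrow> a i j = a j i"
  shows "ip n (mv a n u) v = ip n u (mv a n v)"
proof -
  have "ip n (mv a n u) v = (\<Sum>i<n. \<Sum>j<n. a i j * u j * v i)"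
    unfolding ip_def mv_def by (simp add: sum_distrib_right)
  also have "\<dots> = (\<Sum>j<n. \<Sum>i<n. a i j * u j * v i)" by (rule sum.swap)
  also have "\<dots> = (\<Sum>j<n. \<Sum>i<n. u j * (a j i * v i))"
    by (intro sum.cong refl) (simp add: assms mult.commute mult.left_commute)
  also have "\<dots> = ip n u (mv a n v)"
    unfolding ip_def mv_def by (simp add: sum_distrib_left)
  finally show ?thesis .
qed

lemma ip_itv:
  assumes "\<And>i j. i < n \<Longrightarrow> j < n \<Longrightarrow> a i j = a j i"
  shows "ip n (itv a n j x) (itv a n k x) = ip n x (itv a n (j + k) x)"
proof (induction j arbitrary: k)
  case 0 then show ?case by simp
next
  case (Suc j)
  have "ip n (itv a n (Suc j) x) (itv a n k x) = ip n (mv a n (itv a n j x)) (itv a n k x)"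
    by (simp del: itv.simps(2) add: itv_Suc')
  also have "\<dots> = ip n (itv a n j x) (mv a n (itv a n k x))" by (rule ip_mv_sym[OF assms])
  also have "\<dots> = ip n (itv a n j x) (itv a n (Suc k) x)" by (simp del: itv.simps(2) add: itv_Suc')
  also have "\<dots> = ip n x (itv a n (j + Suc k) x)" by (rule Suc.IH)
  finally show ?case by simp
qed

lemma ip_CS: "(ip n x y)^2 \<le> ip n x x * ip n y y"
proof (cases "ip n y y = 0")
  case True
  then have "\<And>i. i < n \<Longrightarrow> y i = 0" unfolding ip_def by (subst (asm) sum_nonneg_eq_0_iff) auto
  then have "ip n x y = 0" unfolding ip_def by simp
  then show ?thesis using True by simp
next
  case False
  have yy: "ip n y y > 0" using False unfolding ip_def
    by (metis (no_types, lifting) order_le_less sum_nonneg zero_le_square)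
  define c where "c = ip n x y / ip n y y"
  have "0 \<le> (\<Sum>i<n. (x i - c * y i)^2)" by (intro sum_nonneg) auto
  also have "\<dots> = (\<Sum>i<n. x i * x i - 2 * c * (x i * y i) + c^2 * (y i * y i))"
    by (intro sum.cong refl) (simp add: power2_eq_square algebra_simps)
  also have "\<dots> = ip n x x - 2 * c * ip n x y + c^2 * ip n y y"
    unfolding ip_def by (simp add: sum.distrib sum_subtractf sum_distrib_left)
  also have "\<dots> = ip n x x - (ip n x y)^2 / ip n y y"
    unfolding c_def using yy by (simp add: field_simps power2_eq_square)
  finally have "(ip n x y)^2 / ip n y y \<le> ip n x x" by simp
  then show ?thesis using yy by (simp add: field_simps mult.commute)
qed

lemma ip_self_nonneg: "ip n x x \<ge> 0"
  unfolding ip_def by (intro sum_nonneg) auto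

lemma ip_self_zero: "ip n x x = 0 \<Longrightarrow> i < n \<Longrightarrow> x i = 0"
  unfolding ip_def by (subst (asm) sum_nonneg_eq_0_iff) auto

lemma pow_mat_vec_itv:
  assumes A: "A \<in> carrier_mat n n"
    and a: "\<And>i j. i < n \<Longrightarrow> j < n \<Longrightarrow> A $$ (i,j) = complex_of_real (a i j)"
  shows "i < n \<Longrightarrow> (A ^\<^sub>m k *\<^sub>v vec n (\<lambda>i. complex_of_real (x i))) $ i = complex_of_real (itv a n k x i)"
proof (induction k arbitrary: x i)
  case 0
  then show ?case using A by simp
next
  case (Suc k)
  have Av: "A *\<^sub>v vec n (\<lambda>i. complex_of_real (x i)) = vec n (\<lambda>i. complex_of_real (mv a n x i))"
    by (rule eq_vecI) (use A a in \<open>auto simp: scalar_prod_def mv_def atLeast0LessThan\<close>)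
  have "A ^\<^sub>m Suc k *\<^sub>v vec n (\<lambda>i. complex_of_real (x i)) = A ^\<^sub>m k *\<^sub>v (A *\<^sub>v vec n (\<lambda>i. complex_of_real (x i)))"
    using A by (simp del: assoc_mult_mat_vec add: assoc_mult_mat_vec[of _ n n _ n])
  then show ?case using Suc by (simp add: Av)
qed


lemma quad_le_sr1:
  assumes A: "A \<in> carrier_mat n n"
    and a: "\<And>i j. i < n \<Longrightarrow> j < n \<Longrightarrow> A $$ (i,j) = complex_of_real (a i j)"
    and sym: "\<And>i j. i < n \<Longrightarrow> j < n \<Longrightarrow> a i j = a j i"
    and sr: "spectral_radius A < 1"
  shows "ip n x (mv a n x) \<le> ip n x x"
proof (rule ccontr)
  assume "\<not> ?thesis"
  then have gt: "ip n x (mv a n x) > ip n x x" by simp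
  define q0 where "q0 = ip n x x"
  have "q0 \<noteq> 0"
  proof
    assume "q0 = 0"
    then have "\<And>i. i < n \<Longrightarrow> x i = 0" using ip_self_zero[of n x] q0_def by simp
    then have "ip n x (mv a n x) = 0" unfolding ip_def by simp
    with gt \<open>q0 = 0\<close> q0_def show False by simp
  qed
  then have q0: "q0 > 0" using ip_self_nonneg[of n x] q0_def by linarith
  define t where "t = ip n x (mv a n x) / q0"
  have t1: "t > 1" using gt q0 unfolding t_def q0_def[symmetric] by simp
  define q where "q k = ip n x (itv a n k x)" for k
  have q1: "q 1 = t * q0" unfolding q_def t_def using q0 by simp
  have grow: "q (2^m) \<ge> t^(2^m) * q0" for m
  proof (induction m)
    case 0 then show ?case using q1 by simp
  next
    case (Suc m)
    define u where "u = itv a n (2^m) x"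
    have quu: "q (2^Suc m) = ip n u u"
      unfolding q_def u_def using ip_itv[OF sym, where j="2^m" and x=x and k="2^m"] by (simp add: mult_2)
    have cs: "(q (2^m))^2 \<le> q0 * ip n u u" unfolding q_def u_def q0_def by (rule ip_CS)
    have "t^(2^m) * q0 \<ge> 0" using t1 q0 by simp
    then have "(t^(2^m) * q0)^2 \<le> (q (2^m))^2" using Suc.IH by (intro power_mono) auto
    also note cs
    finally have "(t^(2^m) * q0)^2 \<le> q0 * ip n u u" .
    then have "t^(2^Suc m) * q0 * q0 \<le> q0 * ip n u u"
      by (simp add: power2_eq_square power_mult power_add mult_2 algebra_simps)
    then have "t^(2^Suc m) * q0 \<le> ip n u u" using q0 by (simp add: mult.commute)
    then show ?case using quu by simp
  qed
  obtain c where c: "\<And>k. norm_bound (A ^\<^sub>m k) c"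
    using spectral_radius_jnf_norm_bound_less_1_upper_triangular[OF A sr] by blast
  define X where "X = (\<Sum>j<n. \<bar>x j\<bar>)"
  have itb: "\<bar>itv a n k x i\<bar> \<le> c * X" if i: "i < n" for k i
  proof -
    have "complex_of_real (itv a n k x i) = (A ^\<^sub>m k *\<^sub>v vec n (\<lambda>i. complex_of_real (x i))) $ i"
      using pow_mat_vec_itv[OF A a i] by simp
    also have "\<dots> = (\<Sum>j<n. (A ^\<^sub>m k) $$ (i,j) * complex_of_real (x j))"
      using A i by (simp add: scalar_prod_def atLeast0LessThan)
    finally have eq: "complex_of_real (itv a n k x i) = (\<Sum>j<n. (A ^\<^sub>m k) $$ (i,j) * complex_of_real (x j))" .
    have "\<bar>itv a n k x i\<bar> = norm (\<Sum>j<n. (A ^\<^sub>m k) $$ (i,j) * complex_of_real (x j))"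
      using arg_cong[OF eq, of norm] by simp
    also have "\<dots> \<le> (\<Sum>j<n. norm ((A ^\<^sub>m k) $$ (i,j) * complex_of_real (x j)))"
      by (rule norm_sum)
    also have "\<dots> \<le> (\<Sum>j<n. c * \<bar>x j\<bar>)"
    proof (intro sum_mono)
      fix j assume "j \<in> {..<n}"
      then have "norm ((A ^\<^sub>m k) $$ (i,j)) \<le> c" using c[of k] A i unfolding norm_bound_def by auto
      then show "norm ((A ^\<^sub>m k) $$ (i,j) * complex_of_real (x j)) \<le> c * \<bar>x j\<bar>"
        by (simp add: norm_mult mult_right_mono)
    qed
    also have "\<dots> = c * X" unfolding X_def by (simp add: sum_distrib_left)
    finally show ?thesis .
  qed
  have qb: "q k \<le> c * X * X" for k
  proof -
    have "q k \<le> (\<Sum>i<n. \<bar>x i\<bar> * (c * X))"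
      unfolding q_def ip_def
    proof (intro sum_mono)
      fix i assume "i \<in> {..<n}"
      then have "\<bar>itv a n k x i\<bar> \<le> c * X" using itb by simp
      then have "\<bar>x i * itv a n k x i\<bar> \<le> \<bar>x i\<bar> * (c * X)"
        by (simp add: abs_mult mult_left_mono)
      then show "x i * itv a n k x i \<le> \<bar>x i\<bar> * (c * X)" by linarith
    qed
    also have "\<dots> = c * X * X" unfolding X_def by (simp add: sum_distrib_right mult.commute)
    finally show ?thesis .
  qed
  obtain m where m: "c * X * X / q0 < t ^ m" using real_arch_pow[OF t1] by blast
  have "t ^ m \<le> t ^ (2^m)" using t1 by (intro power_increasing) (auto intro: less_imp_le)
  then have "q0 * t ^ m \<le> q0 * t^(2^m)" using q0 by simp
  moreover have "c * X * X < q0 * t ^ m" using m q0 by (simp add: field_simps)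
  ultimately have "c * X * X < t^(2^m) * q0" by (simp add: mult.commute)
  with grow[of m] qb[of "2^m"] show False by simp
qed


lemma smult_mat_mult_vec:
  assumes "B \<in> carrier_mat n n" "v \<in> carrier_vec n"
  shows "((k::complex) \<cdot>\<^sub>m B) *\<^sub>v v = k \<cdot>\<^sub>v (B *\<^sub>v v)"
  by (rule eq_vecI) (use assms in \<open>auto simp: scalar_prod_def sum_distrib_left mult.assoc\<close>)

lemma sr_nonneg:
  assumes A: "A \<in> carrier_mat n n" and n: "n > 0"
  shows "spectral_radius A \<ge> 0"
  using spectral_radius_mem_max(1)[OF A n] by auto

lemma rayleigh:
  assumes A: "A \<in> carrier_mat n n"
    and a: "\<And>i j. i < n \<Longrightarrow> j < n \<Longrightarrow> A $$ (i,j) = complex_of_real (a i j)"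
    and sym: "\<And>i j. i < n \<Longrightarrow> j < n \<Longrightarrow> a i j = a j i"
  shows "ip n x (mv a n x) \<le> spectral_radius A * ip n x x"
proof (cases "n = 0")
  case True then show ?thesis unfolding ip_def by simp
next
  case False
  then have n: "n > 0" by simp
  define \<rho> where "\<rho> = spectral_radius A"
  have \<rho>0: "\<rho> \<ge> 0" unfolding \<rho>_def by (rule sr_nonneg[OF A n])
  show ?thesis
  proof (rule ccontr)
    assume "\<not> ?thesis"
    then have gt: "ip n x (mv a n x) > \<rho> * ip n x x" unfolding \<rho>_def by simp
    define q0 where "q0 = ip n x x"
    have "q0 \<noteq> 0"
    proof
      assume "q0 = 0"
      then have "\<And>i. i < n \<Longrightarrow> x i = 0" using ip_self_zero[of n x] q0_def by simp
      then have "ip n x (mv a n x) = 0" unfolding ip_def by simp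
      with gt \<open>q0 = 0\<close> q0_def show False by simp
    qed
    then have q0: "q0 > 0" using ip_self_nonneg[of n x] q0_def by linarith
    define R where "R = ip n x (mv a n x) / q0"
    have R: "R > \<rho>" using gt q0 unfolding R_def q0_def[symmetric] by (simp add: field_simps)
    define r where "r = (\<rho> + R) / 2"
    have r: "r > \<rho>" "r < R" "r > 0" using R \<rho>0 unfolding r_def by auto
    define B where "B = complex_of_real (1 / r) \<cdot>\<^sub>m A"
    have B: "B \<in> carrier_mat n n" unfolding B_def using A by simp
    have b: "\<And>i j. i < n \<Longrightarrow> j < n \<Longrightarrow> B $$ (i,j) = complex_of_real (a i j / r)"
      unfolding B_def using A a by simp
    have symb: "\<And>i j. i < n \<Longrightarrow> j < n \<Longrightarrow> a i j / r = a j i / r" using sym by simp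
    have srB: "spectral_radius B < 1"
    proof -
      obtain e where e: "e \<in> spectrum B" and eq: "spectral_radius B = norm e"
        using spectral_radius_mem_max(1)[OF B n] by auto
      from e obtain v where ev: "eigenvector B v e" unfolding spectrum_def eigenvalue_def by auto
      then have v: "v \<in> carrier_vec n" "v \<noteq> 0\<^sub>v n" and Bv: "B *\<^sub>v v = e \<cdot>\<^sub>v v"
        unfolding eigenvector_def using B by auto
      have AB: "A = complex_of_real r \<cdot>\<^sub>m B" unfolding B_def using r
        by (intro eq_matI) (use A in auto)
      have "A *\<^sub>v v = complex_of_real r \<cdot>\<^sub>v (B *\<^sub>v v)"
        unfolding AB by (rule smult_mat_mult_vec[OF B v(1)])
      also have "\<dots> = (complex_of_real r * e) \<cdot>\<^sub>v v" using Bv by (simp add: smult_smult_assoc)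
      finally have "eigenvector A v (complex_of_real r * e)"
        unfolding eigenvector_def using v A by auto
      then have "norm (complex_of_real r * e) \<in> norm ` spectrum A"
        unfolding spectrum_def eigenvalue_def by auto
      from spectral_radius_mem_max(2)[OF A n this] have "r * norm e \<le> \<rho>"
        unfolding \<rho>_def using r by (simp add: norm_mult)
      then have "r * norm e < r * 1" using r by linarith
      then have "norm e < 1" using r by (simp only: mult_less_cancel_left_pos)
      then show ?thesis using eq by simp
    qed
    have "ip n x (mv (\<lambda>i j. a i j / r) n x) \<le> ip n x x"
      by (rule quad_le_sr1[OF B b symb srB])
    moreover have "ip n x (mv (\<lambda>i j. a i j / r) n x) = ip n x (mv a n x) / r"
      unfolding ip_def mv_def by (simp add: sum_divide_distrib sum_distrib_left)
    moreover have "ip n x (mv a n x) = R * q0" unfolding R_def using q0 by simp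
    moreover have "R * q0 / r > q0" using r q0 by (simp add: field_simps)
    ultimately show False unfolding q0_def by simp
  qed
qed


lemma split_sum: "sum f {..<(n::nat)+s} = sum f {..<n} + (sum f {n..<n+s} :: real)"
proof -
  have "{..<n+s} = {..<n} \<union> {n..<n+s}" by auto
  then show ?thesis by (simp add: sum.union_disjoint[of "{..<n}" "{n..<n+s}"] ivl_disj_int)
qed

definition ad :: "(nat \<Rightarrow> nat \<Rightarrow> bool) \<Rightarrow> nat \<Rightarrow> nat \<Rightarrow> real" where
  "ad E i j = (if E i j then 1 else 0)"

lemma adj_carrier: "adj_mat n E \<in> carrier_mat n n"
  unfolding adj_mat_def by simp

lemma adj_entries: "i < n \<Longrightarrow> j < n \<Longrightarrow> adj_mat n E $$ (i,j) = complex_of_real (ad E i j)"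
  unfolding adj_mat_def ad_def by simp

lemma adj_mult_real: "i < n \<Longrightarrow>
  (adj_mat n E *\<^sub>v vec n (\<lambda>j. complex_of_real (x j))) $ i = complex_of_real (mv (ad E) n x i)"
  using adj_carrier[of n E] adj_entries[of _ n _ E]
  by (simp add: scalar_prod_def mv_def atLeast0LessThan)

lemma mv_ad: "mv (ad E) n x i = (\<Sum>j\<in>{j. j < n \<and> E i j}. x j)"
proof -
  have "mv (ad E) n x i = (\<Sum>j<n. if E i j then x j else 0)"
    unfolding mv_def ad_def by (intro sum.cong) auto
  also have "\<dots> = (\<Sum>j\<in>{j\<in>{..<n}. E i j}. x j)" by (rule sum.inter_filter[symmetric]) simp
  also have "{j\<in>{..<n}. E i j} = {j. j < n \<and> E i j}" by auto
  finally show ?thesis .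
qed

lemma sr_regular_le:
  assumes n: "n > 0" and d: "\<And>i. i < n \<Longrightarrow> degree_in n E i = d"
  shows "graph_spectral_radius n E \<le> real d"
proof -
  let ?A = "adj_mat n E"
  have A: "?A \<in> carrier_mat n n" by (rule adj_carrier)
  obtain e where e: "e \<in> spectrum ?A" and eq: "spectral_radius ?A = norm e"
    using spectral_radius_mem_max(1)[OF A n] by auto
  from e obtain v where ev: "eigenvector ?A v e" unfolding spectrum_def eigenvalue_def by auto
  then have v: "v \<in> carrier_vec n" "v \<noteq> 0\<^sub>v n" and Av: "?A *\<^sub>v v = e \<cdot>\<^sub>v v"
    unfolding eigenvector_def using A by auto
  define M where "M = Max ((\<lambda>j. norm (v $ j)) ` {..<n})"
  have fin: "finite ((\<lambda>j. norm (v $ j)) ` {..<n})" by simp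
  have ne: "(\<lambda>j. norm (v $ j)) ` {..<n} \<noteq> {}" using n by auto
  obtain i0 where i0: "i0 < n" "M = norm (v $ i0)"
    using Max_in[OF fin ne] unfolding M_def by auto
  have Mge: "norm (v $ j) \<le> M" if "j < n" for j
    unfolding M_def using that by (intro Max_ge[OF fin]) auto
  have "M > 0"
  proof (rule ccontr)
    assume "\<not> M > 0"
    then have "\<And>j. j < n \<Longrightarrow> v $ j = 0" using Mge by (meson norm_le_zero_iff order.trans not_less)
    then have "v = 0\<^sub>v n" using v(1) by (intro eq_vecI) auto
    with v(2) show False by simp
  qed
  have "e * v $ i0 = (?A *\<^sub>v v) $ i0" using Av i0 v by simp
  also have "\<dots> = (\<Sum>j<n. ?A $$ (i0,j) * v $ j)"
    using A i0 v by (simp add: scalar_prod_def atLeast0LessThan)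
  finally have eq1: "e * v $ i0 = (\<Sum>j<n. ?A $$ (i0,j) * v $ j)" .
  have "norm e * M = norm (\<Sum>j<n. ?A $$ (i0,j) * v $ j)"
    using arg_cong[OF eq1, of norm] i0 by (simp add: norm_mult)
  also have "\<dots> \<le> (\<Sum>j<n. norm (?A $$ (i0,j) * v $ j))" by (rule norm_sum)
  also have "\<dots> \<le> (\<Sum>j<n. ad E i0 j * M)"
  proof (intro sum_mono)
    fix j assume j: "j \<in> {..<n}"
    then show "norm (?A $$ (i0,j) * v $ j) \<le> ad E i0 j * M"
      using adj_entries[of i0 n j E] i0 Mge[of j] \<open>M > 0\<close> by (auto simp: ad_def norm_mult)
  qed
  also have "\<dots> = mv (ad E) n (\<lambda>_. M) i0" unfolding mv_def by simp
  also have "\<dots> = real (degree_in n E i0) * M" unfolding mv_ad degree_in_def by simp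
  also have "\<dots> = real d * M" using d i0 by simp
  finally have "norm e * M \<le> real d * M" .
  then have "norm e \<le> real d" using \<open>M > 0\<close> by simp
  then show ?thesis unfolding graph_spectral_radius_def eq .
qed


lemma rho_eq:
  fixes d n s :: real
  assumes "d \<ge> 0" "n \<ge> 0" "s \<ge> 0"
  defines "\<rho> \<equiv> (d + sqrt (d^2 + 4*n*s)) / 2"
  shows "\<rho>^2 = d * \<rho> + n * s" "\<rho> \<ge> d"
proof -
  have sq: "(sqrt (d^2 + 4*n*s))^2 = d^2 + 4*n*s" using assms by simp
  show "\<rho>^2 = d * \<rho> + n * s" unfolding \<rho>_def using sq
    by (simp add: power2_eq_square field_simps)
  have "sqrt (d^2) \<le> sqrt (d^2 + 4*n*s)" using assms by (intro real_sqrt_le_mono) simp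
  then have "d \<le> sqrt (d^2 + 4*n*s)" using assms by simp
  then show "\<rho> \<ge> d" unfolding \<rho>_def by simp
qed

lemma join_eig:
  assumes n: "n > 0" and s: "s \<ge> 1" and d: "\<And>i. i < n \<Longrightarrow> degree_in n E i = d"
  shows "(real d + sqrt ((real d)^2 + 4 * real n * real s)) / 2 \<le> graph_spectral_radius (n+s) (join_empty n E)"
proof -
  define \<rho> where "\<rho> = (real d + sqrt ((real d)^2 + 4 * real n * real s)) / 2"
  have \<rho>sq: "\<rho>^2 = real d * \<rho> + real n * real s" and \<rho>d: "\<rho> \<ge> real d"
    using rho_eq[of "real d" "real n" "real s"] unfolding \<rho>_def by auto
  have "sqrt ((real d)^2 + 4 * real n * real s) > 0" using n s by (intro real_sqrt_gt_zero) (auto intro: add_nonneg_pos)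
  moreover have "real d \<ge> 0" by simp
  ultimately have \<rho>pos: "\<rho> > 0" unfolding \<rho>_def by (intro divide_pos_pos add_nonneg_pos) auto
  define N where "N = n + s"
  define J where "J = join_empty n E"
  define vr where "vr j = (if j < n then \<rho> else real n)" for j
  have key: "mv (ad J) N vr i = \<rho> * vr i" if i: "i < N" for i
  proof -
    have "mv (ad J) N vr i = (\<Sum>j<n. ad J i j * vr j) + (\<Sum>j\<in>{n..<n+s}. ad J i j * vr j)"
      unfolding mv_def N_def by (rule split_sum)
    also have "\<dots> = \<rho> * vr i"
    proof (cases "i < n")
      case True
      have "(\<Sum>j<n. ad J i j * vr j) = (\<Sum>j<n. ad E i j * \<rho>)"
        using True by (intro sum.cong) (auto simp: ad_def J_def join_empty_def vr_def)
      also have "\<dots> = mv (ad E) n (\<lambda>_. \<rho>) i" unfolding mv_def by simp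
      also have "\<dots> = real d * \<rho>" unfolding mv_ad using d[OF True] by (simp add: degree_in_def)
      finally have 1: "(\<Sum>j<n. ad J i j * vr j) = real d * \<rho>" .
      have "(\<Sum>j\<in>{n..<n+s}. ad J i j * vr j) = (\<Sum>j\<in>{n..<n+s}. real n)"
        using True by (intro sum.cong) (auto simp: ad_def J_def join_empty_def vr_def)
      also have "\<dots> = real n * real s" by simp
      finally have 2: "(\<Sum>j\<in>{n..<n+s}. ad J i j * vr j) = real n * real s" .
      show ?thesis using 1 2 \<rho>sq True by (simp add: vr_def power2_eq_square)
    next
      case False
      have "(\<Sum>j<n. ad J i j * vr j) = (\<Sum>j<n. \<rho>)"
        using False by (intro sum.cong) (auto simp: ad_def J_def join_empty_def vr_def)
      moreover have "(\<Sum>j\<in>{n..<n+s}. ad J i j * vr j) = 0"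
        using False by (intro sum.neutral) (auto simp: ad_def J_def join_empty_def vr_def)
      ultimately show ?thesis using False by (simp add: vr_def mult.commute)
    qed
    finally show ?thesis .
  qed
  let ?A = "adj_mat N J"
  have A: "?A \<in> carrier_mat N N" by (rule adj_carrier)
  define v where "v = vec N (\<lambda>j. complex_of_real (vr j))"
  have Av: "?A *\<^sub>v v = complex_of_real \<rho> \<cdot>\<^sub>v v"
  proof (rule eq_vecI)
    fix i assume "i < dim_vec (complex_of_real \<rho> \<cdot>\<^sub>v v)"
    then have i: "i < N" by (simp add: v_def)
    have "(?A *\<^sub>v v) $ i = complex_of_real (mv (ad J) N vr i)"
      unfolding v_def by (rule adj_mult_real[OF i])
    then show "(?A *\<^sub>v v) $ i = (complex_of_real \<rho> \<cdot>\<^sub>v v) $ i"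
      using i key[OF i] by (simp add: v_def)
  qed (use A in \<open>simp add: v_def\<close>)
  have "v $ 0 \<noteq> 0" unfolding v_def vr_def using n \<rho>pos N_def by simp
  then have "v \<noteq> 0\<^sub>v N" using n N_def by auto
  then have "eigenvector ?A v (complex_of_real \<rho>)"
    unfolding eigenvector_def using Av A by (auto simp: v_def)
  then have "complex_of_real \<rho> \<in> spectrum ?A"
    unfolding spectrum_def eigenvalue_def by auto
  then have "norm (complex_of_real \<rho>) \<in> norm ` spectrum ?A" by (rule imageI)
  from spectral_radius_mem_max(2)[OF A _ this] n have "\<rho> \<le> spectral_radius ?A"
    using \<rho>pos N_def by simp
  then show ?thesis unfolding graph_spectral_radius_def \<rho>_def N_def J_def .
qed


lemma join_upper:
  assumes n: "n > 0" and sg: "simple_graph n E"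
    and lam: "graph_spectral_radius n E \<le> real d"
  shows "graph_spectral_radius (n+s) (join_empty n E) \<le> (real d + sqrt ((real d)^2 + 4 * real n * real s)) / 2"
proof -
  define \<rho> where "\<rho> = (real d + sqrt ((real d)^2 + 4 * real n * real s)) / 2"
  have \<rho>sq: "\<rho>^2 = real d * \<rho> + real n * real s" and \<rho>d: "\<rho> \<ge> real d"
    using rho_eq[of "real d" "real n" "real s"] unfolding \<rho>_def by auto
  define N where "N = n + s"
  define J where "J = join_empty n E"
  let ?A = "adj_mat N J"
  have A: "?A \<in> carrier_mat N N" by (rule adj_carrier)
  have N: "N > 0" using n N_def by simp
  obtain \<mu> where mu: "\<mu> \<in> spectrum ?A" and eq: "spectral_radius ?A = norm \<mu>"
    using spectral_radius_mem_max(1)[OF A N] by auto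
  from mu obtain v where ev: "eigenvector ?A v \<mu>" unfolding spectrum_def eigenvalue_def by auto
  then have v: "v \<in> carrier_vec N" "v \<noteq> 0\<^sub>v N" and Av: "?A *\<^sub>v v = \<mu> \<cdot>\<^sub>v v"
    unfolding eigenvector_def using A by auto
  define w where "w j = norm (v $ j)" for j
  define t where "t = norm \<mu>"
  have w0: "w j \<ge> 0" for j unfolding w_def by simp
  have ineq: "t * w i \<le> mv (ad J) N w i" if i: "i < N" for i
  proof -
    have "\<mu> * v $ i = (?A *\<^sub>v v) $ i" using Av i v by simp
    also have "\<dots> = (\<Sum>j<N. ?A $$ (i,j) * v $ j)"
      using A i v by (simp add: scalar_prod_def atLeast0LessThan)
    finally have eq1: "\<mu> * v $ i = (\<Sum>j<N. ?A $$ (i,j) * v $ j)" .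
    have "t * w i = norm (\<Sum>j<N. ?A $$ (i,j) * v $ j)"
      using arg_cong[OF eq1, of norm] unfolding t_def w_def by (simp add: norm_mult)
    also have "\<dots> \<le> (\<Sum>j<N. norm (?A $$ (i,j) * v $ j))" by (rule norm_sum)
    also have "\<dots> = mv (ad J) N w i" unfolding mv_def
    proof (intro sum.cong refl)
      fix j assume "j \<in> {..<N}"
      then show "norm (?A $$ (i,j) * v $ j) = ad J i j * w j"
        using adj_entries[of i N j J] i by (auto simp: ad_def norm_mult w_def)
    qed
    finally show ?thesis .
  qed
  define S where "S = (\<Sum>j<n. w j)"
  define Y where "Y = (\<Sum>j\<in>{n..<n+s}. w j)"
  have S0: "S \<ge> 0" unfolding S_def using w0 by (simp add: sum_nonneg)
  have mvlow: "mv (ad J) N w i = mv (ad E) n w i + Y" if i: "i < n" for i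
  proof -
    have "mv (ad J) N w i = (\<Sum>j<n. ad J i j * w j) + (\<Sum>j\<in>{n..<n+s}. ad J i j * w j)"
      unfolding mv_def N_def by (rule split_sum)
    moreover have "(\<Sum>j<n. ad J i j * w j) = mv (ad E) n w i"
      unfolding mv_def using i by (intro sum.cong) (auto simp: ad_def J_def join_empty_def)
    moreover have "(\<Sum>j\<in>{n..<n+s}. ad J i j * w j) = Y"
      unfolding Y_def using i by (intro sum.cong) (auto simp: ad_def J_def join_empty_def)
    ultimately show ?thesis by simp
  qed
  have mvhigh: "mv (ad J) N w i = S" if i: "n \<le> i" for i
  proof -
    have "mv (ad J) N w i = (\<Sum>j<n. ad J i j * w j) + (\<Sum>j\<in>{n..<n+s}. ad J i j * w j)"
      unfolding mv_def N_def by (rule split_sum)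
    moreover have "(\<Sum>j<n. ad J i j * w j) = S"
      unfolding S_def using i by (intro sum.cong) (auto simp: ad_def J_def join_empty_def)
    moreover have "(\<Sum>j\<in>{n..<n+s}. ad J i j * w j) = 0"
      using i by (intro sum.neutral) (auto simp: ad_def J_def join_empty_def)
    ultimately show ?thesis by simp
  qed
  define q0 where "q0 = ip n w w"
  define Q where "Q = ip n w (mv (ad E) n w)"
  have a: "t * q0 \<le> Q + Y * S"
  proof -
    have "t * q0 = (\<Sum>i<n. w i * (t * w i))" unfolding q0_def ip_def
      by (simp add: sum_distrib_left mult.commute mult.left_commute)
    also have "\<dots> \<le> (\<Sum>i<n. w i * (mv (ad E) n w i + Y))"
    proof (intro sum_mono)
      fix i assume "i \<in> {..<n}"
      then have "i < n" by simp
      then have "t * w i \<le> mv (ad E) n w i + Y" using ineq[of i] mvlow[of i] N_def by simp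
      then show "w i * (t * w i) \<le> w i * (mv (ad E) n w i + Y)" using w0[of i] by (rule mult_left_mono)
    qed
    also have "\<dots> = Q + Y * S" unfolding Q_def ip_def S_def
      by (simp add: distrib_left sum.distrib sum_distrib_left mult.commute)
    finally show ?thesis .
  qed
  have b: "t * Y \<le> real s * S"
  proof -
    have "t * Y = (\<Sum>i\<in>{n..<n+s}. t * w i)" unfolding Y_def by (simp add: sum_distrib_left)
    also have "\<dots> \<le> (\<Sum>i\<in>{n..<n+s}. S)"
    proof (intro sum_mono)
      fix i assume "i \<in> {n..<n+s}"
      then show "t * w i \<le> S" using ineq[of i] mvhigh[of i] N_def by simp
    qed
    also have "\<dots> = real s * S" by simp
    finally show ?thesis .
  qed
  have symE: "\<And>i j. i < n \<Longrightarrow> j < n \<Longrightarrow> ad E i j = ad E j i"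
    using sg unfolding simple_graph_def ad_def by auto
  have c: "Q \<le> real d * q0"
  proof -
    have "Q \<le> graph_spectral_radius n E * q0" unfolding Q_def q0_def graph_spectral_radius_def
      by (rule rayleigh[OF adj_carrier adj_entries symE])
    also have "\<dots> \<le> real d * q0" using lam ip_self_nonneg[of n w] unfolding q0_def
      by (rule mult_right_mono)
    finally show ?thesis .
  qed
  have dd: "S^2 \<le> real n * q0"
  proof -
    have "S = ip n (\<lambda>_. 1) w" unfolding S_def ip_def by simp
    moreover have "ip n (\<lambda>_. 1) (\<lambda>_. 1) = real n" unfolding ip_def by simp
    ultimately show ?thesis using ip_CS[of n "\<lambda>_. 1" w] unfolding q0_def by simp
  qed
  have q0nn: "q0 \<ge> 0" unfolding q0_def by (rule ip_self_nonneg)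
  show ?thesis
  proof (rule ccontr)
    assume "\<not> ?thesis"
    moreover have "graph_spectral_radius (n+s) (join_empty n E) = t"
      unfolding graph_spectral_radius_def t_def using eq N_def J_def by simp
    ultimately have tgt: "t > \<rho>" unfolding \<rho>_def by simp
    have \<rho>0: "\<rho> \<ge> 0" using \<rho>d by simp
    have tpos: "t > 0" using tgt \<rho>0 by simp
    have "t * (t * q0) \<le> t * (Q + Y * S)" using a tpos by simp
    also have "\<dots> = t * Q + (t * Y) * S" by (simp add: algebra_simps)
    also have "\<dots> \<le> t * (real d * q0) + (real s * S) * S"
      using c b tpos S0 by (intro add_mono mult_left_mono mult_right_mono) auto
    also have "\<dots> \<le> t * (real d * q0) + real s * (real n * q0)"
      using dd by (simp add: power2_eq_square mult.assoc mult_left_mono)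
    finally have main: "(t * t - real d * t - real n * real s) * q0 \<le> 0"
      by (simp add: algebra_simps)
    have "t * t - real d * t - real n * real s = (t - \<rho>) * (t + \<rho> - real d)"
      using \<rho>sq by (simp add: algebra_simps power2_eq_square)
    moreover have "(t - \<rho>) * (t + \<rho> - real d) > 0" using tgt \<rho>d \<rho>0 by (intro mult_pos_pos) auto
    ultimately have pos: "t * t - real d * t - real n * real s > 0" by simp
    from main pos q0nn have "q0 = 0" by (smt (verit) mult_pos_pos)
    then have wlow: "\<And>i. i < n \<Longrightarrow> w i = 0" using ip_self_zero[of n w] unfolding q0_def by simp
    then have "S = 0" unfolding S_def by simp
    have whigh: "w i = 0" if "n \<le> i" "i < N" for i
    proof -
      have "t * w i \<le> 0" using ineq[of i] mvhigh[of i] that \<open>S = 0\<close> by simp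
      then show ?thesis using tpos w0[of i] by (simp add: mult_le_0_iff)
    qed
    have "v = 0\<^sub>v N"
    proof (rule eq_vecI)
      fix i assume "i < dim_vec (0\<^sub>v N :: complex vec)"
      then have i: "i < N" by simp
      have "w i = 0" using wlow whigh i by (cases "i < n") auto
      then show "v $ i = 0\<^sub>v N $ i" using i unfolding w_def by simp
    qed (use v in simp)
    with v(2) show False by simp
  qed
qed


theorem theorem5p2:
  fixes n s :: nat and EG EH :: "nat \<Rightarrow> nat \<Rightarrow> bool"
  assumes "simple_graph n EG" and "simple_graph n EH"
    and "regular_graph n EG"
    and "graph_spectral_radius n EG \<ge> graph_spectral_radius n EH"
    and "s \<ge> 1"
  shows "graph_spectral_radius (n + s) (join_empty n EG)
           \<ge> graph_spectral_radius (n + s) (join_empty n EH)"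
proof (cases "n = 0")
  case True
  then have "join_empty n EG = join_empty n EH" by (auto simp: join_empty_def fun_eq_iff)
  then show ?thesis by simp
next
  case False
  then have n: "n > 0" by simp
  obtain d where d: "\<And>i. i < n \<Longrightarrow> degree_in n EG i = d"
    using assms(3) unfolding regular_graph_def by auto
  have "graph_spectral_radius n EH \<le> real d"
    using assms(4) sr_regular_le[OF n d] by simp
  then have "graph_spectral_radius (n + s) (join_empty n EH)
      \<le> (real d + sqrt ((real d)^2 + 4 * real n * real s)) / 2"
    by (rule join_upper[OF n assms(2)])
  also have "\<dots> \<le> graph_spectral_radius (n + s) (join_empty n EG)"
    by (rule join_eig[OF n assms(5) d])
  finally show ?thesis .
qed

end
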